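(* Let $(X,d)$ be a compact metric space and $\omega:\Lambda\times X\to X$ an IFS with compact metric parameter space $\Lambda$. If $\omega$ has the finite shadowing property, then $\omega$ has the shadowing property.
   Context: Write $\omega_\lambda=\omega(\lambda,\cdot)$, with $\omega$ continuous. A chain is a sequence $\{y_k\}_{k\ge0}$ in $X$ such that for each $k\ge1$ there is $\lambda_k\in\Lambda$ with $y_k=\omega_{\lambda_k}(y_{k-1})$. A (finite or infinite) sequence $\{x_k\}$ is a $\delta$-chain if for each $k\ge1$ there is $\lambda_k\in\Lambda$ with $d(x_k,\omega_{\lambda_k}(x_{k-1}))\le\delta$. Shadowing property: for every $\varepsilon>0$ there is $\delta>0$ such that for every infinite $\delta$-chain $\{x_k\}_{k\ge0}$ there is a chain $\{y_k\}$ with $d(x_k,y_k)<\varepsilon$ for all $k\ge0$. Finite shadowing property: for every $\varepsilon>0$ there is $\delta>0$ such that for every finite $\delta$-chain $\{x_0,\dots,x_n\}$ there is a chain $\{y_k\}$ with $d(x_k,y_k)<\varepsilon$ for $k=0,\dots,n$. *)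

theory Defs
  imports "HOL-Analysis.Analysis"
begin

definition is_chain :: "'l set \<Rightarrow> 'x set \<Rightarrow> ('l \<times> 'x \<Rightarrow> 'x) \<Rightarrow> (nat \<Rightarrow> 'x) \<Rightarrow> bool" where
  "is_chain L X w y \<longleftrightarrow> (\<forall>k. y k \<in> X) \<and>
     (\<forall>k\<ge>1. \<exists>l\<in>L. y k = w (l, y (k - 1)))"

definition is_delta_chain :: "'l set \<Rightarrow> 'x set \<Rightarrow> ('l \<times> 'x::metric_space \<Rightarrow> 'x) \<Rightarrow> real \<Rightarrow> (nat \<Rightarrow> 'x) \<Rightarrow> bool" where
  "is_delta_chain L X w \<delta> x \<longleftrightarrow> (\<forall>k. x k \<in> X) \<and>
     (\<forall>k\<ge>1. \<exists>l\<in>L. dist (x k) (w (l, x (k - 1))) \<le> \<delta>)"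

definition is_finite_delta_chain :: "'l set \<Rightarrow> 'x set \<Rightarrow> ('l \<times> 'x::metric_space \<Rightarrow> 'x) \<Rightarrow> real \<Rightarrow> nat \<Rightarrow> (nat \<Rightarrow> 'x) \<Rightarrow> bool" where
  "is_finite_delta_chain L X w \<delta> n x \<longleftrightarrow> (\<forall>k\<le>n. x k \<in> X) \<and>
     (\<forall>k. 1 \<le> k \<and> k \<le> n \<longrightarrow> (\<exists>l\<in>L. dist (x k) (w (l, x (k - 1))) \<le> \<delta>))"

definition shadowing :: "'l set \<Rightarrow> 'x set \<Rightarrow> ('l \<times> 'x::metric_space \<Rightarrow> 'x) \<Rightarrow> bool" where
  "shadowing L X w \<longleftrightarrow> (\<forall>\<epsilon>>0. \<exists>\<delta>>0. \<forall>x. is_delta_chain L X w \<delta> x \<longrightarrow>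
      (\<exists>y. is_chain L X w y \<and> (\<forall>k. dist (x k) (y k) < \<epsilon>)))"

definition finite_shadowing :: "'l set \<Rightarrow> 'x set \<Rightarrow> ('l \<times> 'x::metric_space \<Rightarrow> 'x) \<Rightarrow> bool" where
  "finite_shadowing L X w \<longleftrightarrow> (\<forall>\<epsilon>>0. \<exists>\<delta>>0. \<forall>n x. is_finite_delta_chain L X w \<delta> n x \<longrightarrow>
      (\<exists>y. is_chain L X w y \<and> (\<forall>k\<le>n. dist (x k) (y k) < \<epsilon>)))"

end

theory Submission
  imports Defs
begin

lemma compact_fun_set:
  assumes "compact (S::'a::metric_space set)"
  shows "compact (UNIV \<rightarrow> S :: (nat \<Rightarrow> 'a) set)"
proof -
  have "compactin (product_topology (\<lambda>_. euclidean) UNIV) (PiE UNIV (\<lambda>_. S))"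
    using assms by (simp add: compactin_PiE)
  then show ?thesis by (simp add: euclidean_product_topology PiE_UNIV_domain)
qed

lemma coord_tendsto:
  fixes g :: "nat \<Rightarrow> 'a::metric_space"
  assumes "(f \<longlongrightarrow> g) F"
  shows "((\<lambda>n. f n i) \<longlongrightarrow> g i) F"
  using continuous_on_tendsto_compose[OF continuous_on_product_coordinates[of i] assms]
  by (simp add: o_def)

theorem mainTheorem5:
  fixes X :: "'x::metric_space set" and L :: "'l::metric_space set"
    and w :: "'l \<times> 'x \<Rightarrow> 'x"
  assumes "compact X" and "compact L"
    and "continuous_on (L \<times> X) w" and "w ` (L \<times> X) \<subseteq> X"
    and "finite_shadowing L X w"
  shows "shadowing L X w"
  unfolding shadowing_def
proof (intro allI impI)
  fix \<epsilon> :: real assume "\<epsilon> > 0"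
  then have e2: "\<epsilon>/2 > 0" by simp
  have "\<exists>\<delta>>0. \<forall>n x. is_finite_delta_chain L X w \<delta> n x \<longrightarrow>
      (\<exists>y. is_chain L X w y \<and> (\<forall>k\<le>n. dist (x k) (y k) < \<epsilon>/2))"
    using assms(5) e2 unfolding finite_shadowing_def by blast
  then obtain \<delta> where "\<delta> > 0" and fs0: "\<forall>n x. is_finite_delta_chain L X w \<delta> n x \<longrightarrow>
      (\<exists>y. is_chain L X w y \<and> (\<forall>k\<le>n. dist (x k) (y k) < \<epsilon>/2))"
    by blast
  have fs: "\<exists>y. is_chain L X w y \<and> (\<forall>k\<le>n. dist (x k) (y k) < \<epsilon>/2)"
    if "is_finite_delta_chain L X w \<delta> n x" for n x using fs0 that by blast
  show "\<exists>\<delta>>0. \<forall>x. is_delta_chain L X w \<delta> x \<longrightarrow>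
      (\<exists>y. is_chain L X w y \<and> (\<forall>k. dist (x k) (y k) < \<epsilon>))"
  proof (intro exI[of _ \<delta>] conjI allI impI)
    show "\<delta> > 0" by fact
    fix x assume dc: "is_delta_chain L X w \<delta> x"
    have "\<exists>p. (\<forall>k. p k \<in> L \<times> X \<and> snd (p (Suc k)) = w (p k)) \<and> (\<forall>k\<le>n. dist (x k) (snd (p k)) < \<epsilon>/2)" for n
    proof -
      have "is_finite_delta_chain L X w \<delta> n x"
        using dc unfolding is_delta_chain_def is_finite_delta_chain_def by auto
      then obtain y where yc: "is_chain L X w y" and yd: "\<forall>k\<le>n. dist (x k) (y k) < \<epsilon>/2"
        using fs by blast
      have "\<forall>k. \<exists>l. l \<in> L \<and> y (Suc k) = w (l, y k)"
        using yc unfolding is_chain_def by (metis diff_Suc_1 le_add1 plus_1_eq_Suc)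
      then obtain lab where lab: "\<And>k. lab k \<in> L \<and> y (Suc k) = w (lab k, y k)" by metis
      show ?thesis
        apply (rule exI[of _ "\<lambda>k. (lab k, y k)"])
        using lab yc yd unfolding is_chain_def by auto
    qed
    then obtain P where P: "\<And>n k. P n k \<in> L \<times> X" "\<And>n k. snd (P n (Suc k)) = w (P n k)"
      "\<And>n k. k \<le> n \<Longrightarrow> dist (x k) (snd (P n k)) < \<epsilon>/2"
      by metis
    have "compact (UNIV \<rightarrow> L \<times> X :: (nat \<Rightarrow> 'l \<times> 'x) set)"
      by (rule compact_fun_set) (simp add: assms compact_Times)
    moreover have "\<forall>n. P n \<in> UNIV \<rightarrow> L \<times> X" using P(1) by auto
    ultimately obtain f r where f: "f \<in> UNIV \<rightarrow> L \<times> X" and r: "strict_mono r"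
      and lim: "(P \<circ> r) \<longlonglongrightarrow> f"
      by (metis compact_def)
    have limk: "(\<lambda>n. P (r n) k) \<longlonglongrightarrow> f k" for k
      using coord_tendsto[OF lim, of k] by (simp add: o_def)
    have limy: "(\<lambda>n. snd (P (r n) k)) \<longlonglongrightarrow> snd (f k)" for k
      using tendsto_snd[OF limk] .
    define y where "y k = snd (f k)" for k
    have fk: "f k \<in> L \<times> X" for k using f by auto
    have step: "y (Suc k) = w (f k)" for k
    proof -
      have "(\<lambda>n. w (P (r n) k)) \<longlonglongrightarrow> w (f k)"
        using continuous_on_tendsto_compose[OF assms(3) limk fk] P(1) by auto
      then have "(\<lambda>n. snd (P (r n) (Suc k))) \<longlonglongrightarrow> w (f k)" using P(2) by simp
      with limy[of "Suc k"] show ?thesis unfolding y_def using LIMSEQ_unique by blast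
    qed
    show "\<exists>y. is_chain L X w y \<and> (\<forall>k. dist (x k) (y k) < \<epsilon>)"
    proof (intro exI[of _ y] conjI allI)
      show "is_chain L X w y"
        unfolding is_chain_def
      proof (intro conjI allI impI)
        fix k show "y k \<in> X" using fk[of k] unfolding y_def by auto
      next
        fix k :: nat assume "k \<ge> 1"
        then obtain j where "k = Suc j" by (metis Suc_pred' less_eq_Suc_le One_nat_def)
        then show "\<exists>l\<in>L. y k = w (l, y (k - 1))"
          using step[of j] fk[of j] unfolding y_def by (intro bexI[of _ "fst (f j)"]) auto
      qed
      fix k
      have "(\<lambda>n. dist (x k) (snd (P (r n) k))) \<longlonglongrightarrow> dist (x k) (y k)"
        unfolding y_def by (intro tendsto_intros limy)
      moreover have "\<forall>\<^sub>F n in sequentially. dist (x k) (snd (P (r n) k)) \<le> \<epsilon>/2"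
      proof (rule eventually_sequentiallyI[of k])
        fix n assume "k \<le> n"
        then have "k \<le> r n" using seq_suble[OF r, of n] by linarith
        then show "dist (x k) (snd (P (r n) k)) \<le> \<epsilon>/2" using P(3) less_imp_le by blast
      qed
      ultimately have "dist (x k) (y k) \<le> \<epsilon>/2" by (rule tendsto_upperbound) simp
      then show "dist (x k) (y k) < \<epsilon>" using \<open>\<epsilon> > 0\<close> by linarith
    qed
  qed
qed

end
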